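(* Let $\gamma$ and $\alpha$ be weak compositions of $m$ with $n$ parts and let $\sigma\in S_n$. Denote by $c_\gamma$ the coefficient of the monomial $x_{\sigma_1}^{\gamma_1}x_{\sigma_2}^{\gamma_2}\cdots x_{\sigma_n}^{\gamma_n}$ in $\mathrm{E}^\sigma_\alpha(\mathbf{x};q,t)$. Then $c_\gamma=0$ if $\mathrm{sort}(\gamma)>_{\mathrm{lex}}\mathrm{sort}(\alpha)$; $c_\gamma=0$ if $\mathrm{sort}(\gamma)=\mathrm{sort}(\alpha)$ and $\gamma>_{\mathrm{lex}}\alpha$; and $c_\gamma=1$ if $\gamma=\alpha$.
   Context: Fix $n\ge1$. A composition is $\alpha=(\alpha_1,\dots,\alpha_n)\in\mathbb{Z}_{\ge0}^n$; $\mathrm{sort}(\alpha)$ is the partition obtained by sorting the parts of $\alpha$ in weakly decreasing order, and $>_{\mathrm{lex}}$ is the lexicographic order comparing entries from left to right. Permutations $\sigma\in S_n$ are written in one-line notation $(\sigma_1,\dots,\sigma_n)$. Permuted-basement Macdonald polynomials: the augmented diagram of shape $\alpha$ has rows $r=1,\dots,n$ numbered top to bottom and columns numbered left to right starting from $0$; row $r$ consists of the basement box $(r,0)$ and the boxes $(r,c)$, $1\le c\le\alpha_r$. An augmented filling with basement $\sigma$ is a map $F$ from all boxes to $\{1,\dots,n\}$ with $F(r,0)=\sigma_r$. It is non-attacking if no two distinct boxes have equal entries while lying either in the same column, or in columns $c-1$ and $c$ with the box in column $c$ in a strictly lower row (larger row index) than the box in column $c-1$. Let $\mathrm{NAF}_\sigma(\alpha)$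 be the set of non-attacking such fillings. For a non-basement box $u=(r,c)$ put $d(u)=(r,c-1)$, $\mathrm{leg}(u)=\alpha_r-c$, and $\mathrm{arm}(u)=|\{r'>r: c\le\alpha_{r'}\le\alpha_r\}|+|\{r'<r: c-1\le\alpha_{r'}<\alpha_r\}|$. A non-basement box $u$ is a descent if $F(d(u))<F(u)$; $\mathrm{maj}(F)=\sum_{u\text{ descent}}(\mathrm{leg}(u)+1)$. A type A triple is a triple of boxes $a=(r,c-1)$, $b=(r,c)$, $e=(r',c)$ with $c\ge1$, $r'>r$, $c\le\alpha_{r'}\le\alpha_r$; a type B triple is $a=(r,c-1)$, $b=(r,c)$, $e=(r',c-1)$ with $c\ge1$, $r'<r$, $c-1\le\alpha_{r'}<\alpha_r$. Order the three boxes by their entries, breaking ties so that $a>e>b$; the triple is an inversion triple if $b<a<e$, $a<e<b$ or $e<b<a$ (for type A this means the boxes listed in increasing order go around counter-clockwise, for type B clockwise). $\mathrm{coinv}(F)$ is the number of type A and type B triples that are not inversion triples. Let $\mathbf{x}^F=\prod_{u\text{ non-basement}}x_{F(u)}$. Then $$\mathrm{E}^\sigma_\alpha(\mathbf{x};q,t)=\sum_{F\in\mathrm{NAF}_\sigma(\alpha)}\mathbf{x}^Fq^{\mathrm{maj}F}t^{\mathrm{coinv}F}\prod_{\substack{u\text{ non-basement}\\ F(u)\ne F(d(u))}}\frac{1-t}{1-q^{1+\mathrm{leg}(u)}t^{1+\mathrm{arm}(u)}}\in\mathbb{Q}(q,t)[x_1,\dots,x_n].$$ *)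

theory Defs
  imports "HOL-Library.Poly_Mapping" "HOL-Computational_Algebra.Fraction_Field"
    "HOL-Computational_Algebra.Polynomial" "HOL-Combinatorics.Multiset_Permutations"
begin

text \<open>Compositions and permutations are lists; the paper's 1-based entry alpha_r
  is the list entry at position r - 1. Boxes are pairs (row, column).\<close>

definition ent :: "nat list \<Rightarrow> nat \<Rightarrow> nat" where
  "ent xs r = xs ! (r - 1)"

definition boxes :: "nat list \<Rightarrow> (nat \<times> nat) set" where
  "boxes \<alpha> = {(r, c). 1 \<le> r \<and> r \<le> length \<alpha> \<and> c \<le> ent \<alpha> r}"

definition nonbasement :: "nat list \<Rightarrow> (nat \<times> nat) set" where
  "nonbasement \<alpha> = {(r, c). 1 \<le> r \<and> r \<le> length \<alpha> \<and> 1 \<le> c \<and> c \<le> ent \<alpha> r}"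

definition non_attacking :: "nat list \<Rightarrow> (nat \<times> nat \<Rightarrow> nat) \<Rightarrow> bool" where
  "non_attacking \<alpha> F \<longleftrightarrow>
     (\<forall>r r' c. (r, c) \<in> boxes \<alpha> \<and> (r', c) \<in> boxes \<alpha> \<and> r \<noteq> r' \<longrightarrow> F (r, c) \<noteq> F (r', c)) \<and>
     (\<forall>r r' c. (r, c) \<in> boxes \<alpha> \<and> (r', Suc c) \<in> boxes \<alpha> \<and> r < r' \<longrightarrow> F (r, c) \<noteq> F (r', Suc c))"

text \<open>Fillings are functions on all pairs, required to vanish outside the diagram
  (so that the set of fillings is the set of maps from boxes to {1..n}).\<close>
definition NAF :: "nat list \<Rightarrow> nat list \<Rightarrow> (nat \<times> nat \<Rightarrow> nat) set" where
  "NAF \<sigma> \<alpha> = {F. (\<forall>u. u \<notin> boxes \<alpha> \<longrightarrow> F u = 0) \<and>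
                 (\<forall>u \<in> boxes \<alpha>. F u \<in> {1..length \<alpha>}) \<and>
                 (\<forall>r \<in> {1..length \<alpha>}. F (r, 0) = ent \<sigma> r) \<and>
                 non_attacking \<alpha> F}"

definition leg :: "nat list \<Rightarrow> nat \<times> nat \<Rightarrow> nat" where
  "leg \<alpha> u = ent \<alpha> (fst u) - snd u"

definition arm :: "nat list \<Rightarrow> nat \<times> nat \<Rightarrow> nat" where
  "arm \<alpha> u = (let r = fst u; c = snd u in
     card {r'. r < r' \<and> r' \<le> length \<alpha> \<and> c \<le> ent \<alpha> r' \<and> ent \<alpha> r' \<le> ent \<alpha> r} +
     card {r'. 1 \<le> r' \<and> r' < r \<and> c - 1 \<le> ent \<alpha> r' \<and> ent \<alpha> r' < ent \<alpha> r})"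

definition dbox :: "nat \<times> nat \<Rightarrow> nat \<times> nat" where
  "dbox u = (fst u, snd u - 1)"

definition maj :: "nat list \<Rightarrow> (nat \<times> nat \<Rightarrow> nat) \<Rightarrow> nat" where
  "maj \<alpha> F = (\<Sum>u \<in> {u \<in> nonbasement \<alpha>. F (dbox u) < F u}. leg \<alpha> u + 1)"

text \<open>Boxes are compared by entry, ties broken so that a > e > b
  (ranks a = 2, e = 1, b = 0).\<close>
definition box_less :: "nat \<times> nat \<Rightarrow> nat \<times> nat \<Rightarrow> bool" where
  "box_less x y \<longleftrightarrow> fst x < fst y \<or> (fst x = fst y \<and> snd x < snd y)"

definition inv_triple :: "nat \<Rightarrow> nat \<Rightarrow> nat \<Rightarrow> bool" where
  "inv_triple fa fb fe \<longleftrightarrow> (let a = (fa, 2::nat); b = (fb, 0); e = (fe, 1) in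
     (box_less b a \<and> box_less a e) \<or> (box_less a e \<and> box_less e b) \<or> (box_less e b \<and> box_less b a))"

definition coinv :: "nat list \<Rightarrow> (nat \<times> nat \<Rightarrow> nat) \<Rightarrow> nat" where
  "coinv \<alpha> F =
     card {(r, c, r'). (r, c) \<in> nonbasement \<alpha> \<and> r < r' \<and> r' \<le> length \<alpha> \<and>
              c \<le> ent \<alpha> r' \<and> ent \<alpha> r' \<le> ent \<alpha> r \<and>
              \<not> inv_triple (F (r, c - 1)) (F (r, c)) (F (r', c))} +
     card {(r, c, r'). (r, c) \<in> nonbasement \<alpha> \<and> 1 \<le> r' \<and> r' < r \<and>
              c - 1 \<le> ent \<alpha> r' \<and> ent \<alpha> r' < ent \<alpha> r \<and>
              \<not> inv_triple (F (r, c - 1)) (F (r, c)) (F (r', c - 1))}"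

text \<open>The coefficient field Q(q,t) = fractions of rat poly poly; t is the outer
  polynomial variable, q the inner one.\<close>
type_synonym qt = "rat poly poly fract"

definition qvar :: qt where "qvar = Fraction_Field.Fract [:[:0, 1:]:] 1"
definition tvar :: qt where "tvar = Fraction_Field.Fract [:0, 1:] 1"

definition weight :: "nat list \<Rightarrow> (nat \<times> nat \<Rightarrow> nat) \<Rightarrow> qt" where
  "weight \<alpha> F = qvar ^ maj \<alpha> F * tvar ^ coinv \<alpha> F *
     (\<Prod>u \<in> {u \<in> nonbasement \<alpha>. F u \<noteq> F (dbox u)}.
        (1 - tvar) / (1 - qvar ^ (1 + leg \<alpha> u) * tvar ^ (1 + arm \<alpha> u)))"

definition xexp :: "nat list \<Rightarrow> (nat \<times> nat \<Rightarrow> nat) \<Rightarrow> (nat \<Rightarrow>\<^sub>0 nat)" where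
  "xexp \<alpha> F = (\<Sum>u \<in> nonbasement \<alpha>. Poly_Mapping.single (F u) 1)"

definition Emac :: "nat list \<Rightarrow> nat list \<Rightarrow> (nat \<Rightarrow>\<^sub>0 nat) \<Rightarrow>\<^sub>0 qt" where
  "Emac \<sigma> \<alpha> = (\<Sum>F \<in> NAF \<sigma> \<alpha>. Poly_Mapping.single (xexp \<alpha> F) (weight \<alpha> F))"

definition mon_exp :: "nat list \<Rightarrow> nat list \<Rightarrow> (nat \<Rightarrow>\<^sub>0 nat)" where
  "mon_exp \<sigma> \<gamma> = (\<Sum>i < length \<gamma>. Poly_Mapping.single (\<sigma> ! i) (\<gamma> ! i))"

definition sortp :: "nat list \<Rightarrow> nat list" where
  "sortp xs = rev (sort xs)"

definition lex_gt :: "nat list \<Rightarrow> nat list \<Rightarrow> bool" where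
  "lex_gt xs ys \<longleftrightarrow> (\<exists>i < min (length xs) (length ys).
       take i xs = take i ys \<and> xs ! i > ys ! i)"

end

theory Submission
  imports Defs
begin

definition F0 :: "nat list \<Rightarrow> nat list \<Rightarrow> nat \<times> nat \<Rightarrow> nat" where
  "F0 \<sigma> \<alpha> u = (if u \<in> boxes \<alpha> then ent \<sigma> (fst u) else 0)"

locale perm =
  fixes \<sigma> \<alpha> :: "nat list"
  assumes sigset: "set \<sigma> = {1..length \<alpha>}" and sigdist: "distinct \<sigma>"
begin

lemma len_sig: "length \<sigma> = length \<alpha>"
  using sigset sigdist by (metis card_atLeastAtMost diff_Suc_1 distinct_card)

lemma nb_eq: "nonbasement \<alpha> = Sigma {1..length \<alpha>} (\<lambda>r. {1..ent \<alpha> r})"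
  unfolding nonbasement_def by auto

lemma boxes_eq: "boxes \<alpha> = Sigma {1..length \<alpha>} (\<lambda>r. {0..ent \<alpha> r})"
  unfolding boxes_def by auto

lemma fin_nb[simp]: "finite (nonbasement \<alpha>)" by (simp add: nb_eq)
lemma fin_boxes[simp]: "finite (boxes \<alpha>)" by (simp add: boxes_eq)

lemma nb_boxes: "u \<in> nonbasement \<alpha> \<Longrightarrow> u \<in> boxes \<alpha>"
  unfolding nonbasement_def boxes_def by auto

lemma ent_sig_in: "i \<in> {1..length \<alpha>} \<Longrightarrow> ent \<sigma> i \<in> {1..length \<alpha>}"
proof -
  assume i: "i \<in> {1..length \<alpha>}"
  have "i - 1 < length \<sigma>" using i len_sig by auto
  then have "\<sigma> ! (i - 1) \<in> set \<sigma>" by (rule nth_mem)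
  then show ?thesis using sigset by (simp add: ent_def)
qed

lemma ent_sig_inj: "i \<in> {1..length \<alpha>} \<Longrightarrow> j \<in> {1..length \<alpha>} \<Longrightarrow> ent \<sigma> i = ent \<sigma> j \<Longrightarrow> i = j"
proof -
  assume a: "i \<in> {1..length \<alpha>}" "j \<in> {1..length \<alpha>}" "ent \<sigma> i = ent \<sigma> j"
  then have "i - 1 = j - 1" using nth_eq_iff_index_eq[OF sigdist, of "i - 1" "j - 1"] len_sig
    unfolding ent_def by auto
  then show ?thesis using a by auto
qed

lemma ent_sig_surj: "v \<in> {1..length \<alpha>} \<Longrightarrow> \<exists>i\<in>{1..length \<alpha>}. ent \<sigma> i = v"
proof -
  assume "v \<in> {1..length \<alpha>}"
  then have "v \<in> set \<sigma>" using sigset by simp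
  then obtain j where j: "j < length \<sigma>" "\<sigma> ! j = v" by (auto simp: in_set_conv_nth)
  then show ?thesis using len_sig by (intro bexI[of _ "Suc j"]) (auto simp: ent_def)
qed

end

locale fill = perm +
  fixes F :: "nat \<times> nat \<Rightarrow> nat"
  assumes FN: "F \<in> NAF \<sigma> \<alpha>"
begin

lemma F_out: "u \<notin> boxes \<alpha> \<Longrightarrow> F u = 0" using FN unfolding NAF_def mem_Collect_eq by blast
lemma F_in: "u \<in> boxes \<alpha> \<Longrightarrow> F u \<in> {1..length \<alpha>}" using FN unfolding NAF_def by auto
lemma F_base: "r \<in> {1..length \<alpha>} \<Longrightarrow> F (r, 0) = ent \<sigma> r" using FN unfolding NAF_def by auto
lemma na: "non_attacking \<alpha> F" using FN unfolding NAF_def by simp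
lemma na1: "\<forall>r r' c. (r, c) \<in> boxes \<alpha> \<and> (r', c) \<in> boxes \<alpha> \<and> r \<noteq> r' \<longrightarrow> F (r, c) \<noteq> F (r', c)"
  using na unfolding non_attacking_def by (rule conjunct1)
lemma na2: "\<forall>r r' c. (r, c) \<in> boxes \<alpha> \<and> (r', Suc c) \<in> boxes \<alpha> \<and> r < r' \<longrightarrow> F (r, c) \<noteq> F (r', Suc c)"
  using na unfolding non_attacking_def by (rule conjunct2)
lemma col_inj: "(r, c) \<in> boxes \<alpha> \<Longrightarrow> (r', c) \<in> boxes \<alpha> \<Longrightarrow> F (r, c) = F (r', c) \<Longrightarrow> r = r'"
  using na1 by blast
lemma adj: "(r, c) \<in> boxes \<alpha> \<Longrightarrow> (r', Suc c) \<in> boxes \<alpha> \<Longrightarrow> F (r, c) = F (r', Suc c) \<Longrightarrow> r' \<le> r"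
  using na2 not_le by blast

lemma lookup_xexp: "Poly_Mapping.lookup (xexp \<alpha> F) v = card {u \<in> nonbasement \<alpha>. F u = v}"
  unfolding xexp_def lookup_sum lookup_single
  by (simp add: when_def sum.If_cases[OF fin_nb] Collect_conj_eq)


lemma lookup_mon: "length \<gamma> = length \<alpha> \<Longrightarrow> i \<in> {1..length \<alpha>} \<Longrightarrow>
   Poly_Mapping.lookup (mon_exp \<sigma> \<gamma>) (ent \<sigma> i) = ent \<gamma> i"
proof -
  assume l: "length \<gamma> = length \<alpha>" and i: "i \<in> {1..length \<alpha>}"
  have "\<forall>j\<in>{..<length \<gamma>}. (\<gamma> ! j when \<sigma> ! j = ent \<sigma> i) = (if j = i - 1 then \<gamma> ! j else 0)"
    using nth_eq_iff_index_eq[OF sigdist] len_sig l i by (auto simp: ent_def when_def)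
  then have "Poly_Mapping.lookup (mon_exp \<sigma> \<gamma>) (ent \<sigma> i) = (\<Sum>j<length \<gamma>. if j = i - 1 then \<gamma> ! j else 0)"
    unfolding mon_exp_def lookup_sum lookup_single by (auto intro!: sum.cong)
  also have "\<dots> = ent \<gamma> i" using l i by (simp add: ent_def; linarith)
  finally show ?thesis .
qed

lemma lookup_mon0: "length \<gamma> = length \<alpha> \<Longrightarrow> v \<notin> {1..length \<alpha>} \<Longrightarrow> Poly_Mapping.lookup (mon_exp \<sigma> \<gamma>) v = 0"
proof -
  assume l: "length \<gamma> = length \<alpha>" and v: "v \<notin> {1..length \<alpha>}"
  have "\<forall>j\<in>{..<length \<gamma>}. (\<gamma> ! j when \<sigma> ! j = v) = 0"
  proof
    fix j assume "j \<in> {..<length \<gamma>}"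
    then have "j < length \<sigma>" using l len_sig by simp
    then have "\<sigma> ! j \<in> {1..length \<alpha>}" using sigset nth_mem by blast
    then show "(\<gamma> ! j when \<sigma> ! j = v) = 0" using v by (auto simp: when_def)
  qed
  then show ?thesis unfolding mon_exp_def lookup_sum lookup_single by simp
qed


definition S :: "nat \<Rightarrow> nat \<Rightarrow> (nat \<times> nat) set" where
  "S i x = {u \<in> nonbasement \<alpha>. F u = ent \<sigma> i \<and> x < snd u}"

lemma fin_S[simp]: "finite (S i x)" unfolding S_def by simp

lemma S_ge:
  assumes i: "i \<in> {1..length \<alpha>}" and k: "card {u \<in> nonbasement \<alpha>. F u = ent \<sigma> i} = k"
  shows "k - x \<le> card (S i x)"
proof -
  let ?P = "{u \<in> nonbasement \<alpha>. F u = ent \<sigma> i}"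
  let ?P1 = "{u \<in> nonbasement \<alpha>. F u = ent \<sigma> i \<and> snd u \<le> x}"
  have "?P = ?P1 \<union> S i x" unfolding S_def by auto
  then have "k \<le> card ?P1 + card (S i x)" using k card_Un_le[of ?P1 "S i x"] by simp
  moreover have "card ?P1 \<le> card {1..x}"
  proof (rule card_inj_on_le[where f = snd])
    show "inj_on snd ?P1"
    proof (rule inj_onI)
      fix u u' assume "u \<in> ?P1" "u' \<in> ?P1" "snd u = snd u'"
      then have b: "u \<in> boxes \<alpha>" "u' \<in> boxes \<alpha>" "F u = F u'" "snd u = snd u'"
        using nb_boxes by auto
      obtain r c where u: "u = (r, c)" by fastforce
      obtain r' c' where u': "u' = (r', c')" by fastforce
      show "u = u'" using b col_inj[of r c r'] u u' by auto
    qed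
    show "snd ` ?P1 \<subseteq> {1..x}" unfolding nonbasement_def by auto
  qed simp
  ultimately show ?thesis by simp
qed

lemma union_bound:
  assumes I: "I \<subseteq> {1..length \<alpha>}" and B: "finite B" and sub: "\<forall>i\<in>I. S i x \<subseteq> B"
  shows "(\<Sum>i\<in>I. card (S i x)) \<le> card B"
proof -
  have fI: "finite I" using I finite_subset by blast
  have "card (\<Union>i\<in>I. S i x) = (\<Sum>i\<in>I. card (S i x))"
  proof (rule card_UN_disjoint[OF fI])
    show "\<forall>i\<in>I. finite (S i x)" by simp
    show "\<forall>i\<in>I. \<forall>j\<in>I. i \<noteq> j \<longrightarrow> S i x \<inter> S j x = {}"
    proof (intro ballI impI)
      fix i j assume ij: "i \<in> I" "j \<in> I" "i \<noteq> j"
      then have "ent \<sigma> i \<noteq> ent \<sigma> j" using ent_sig_inj I by blast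
      then show "S i x \<inter> S j x = {}" unfolding S_def by auto
    qed
  qed
  moreover have "card (\<Union>i\<in>I. S i x) \<le> card B" using sub B by (intro card_mono) auto
  ultimately show ?thesis by simp
qed

lemma card_cols:
  assumes R: "R \<subseteq> {1..length \<alpha>}"
  shows "card {u \<in> nonbasement \<alpha>. fst u \<in> R \<and> x < snd u} = (\<Sum>r\<in>R. ent \<alpha> r - x)"
proof -
  have fR: "finite R" using R finite_subset by blast
  have "{u \<in> nonbasement \<alpha>. fst u \<in> R \<and> x < snd u} = Sigma R (\<lambda>r. {x<..ent \<alpha> r})"
    using R unfolding nonbasement_def by auto
  then show ?thesis using fR by simp
qed

end

definition D :: "nat list \<Rightarrow> nat \<Rightarrow> nat" where
  "D xs x = sum_list (map (\<lambda>a. a - x) xs)"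

lemma D_ent: "D xs x = (\<Sum>i\<in>{1..length xs}. ent xs i - x)"
proof -
  have "D xs x = (\<Sum>j\<in>{0..<length xs}. xs ! j - x)"
    unfolding D_def by (simp add: sum_list_sum_nth)
  also have "\<dots> = (\<Sum>i\<in>{1..length xs}. ent xs i - x)"
    by (rule sum.reindex_bij_witness[of _ "\<lambda>i. i - 1" Suc]) (auto simp: ent_def)
  finally show ?thesis .
qed

lemma D_mset: "mset xs = mset ys \<Longrightarrow> D xs x = D ys x"
  unfolding D_def by (metis mset_map sum_mset_sum_list)

lemma D_sortp: "D (sortp xs) x = D xs x"
  by (rule D_mset) (simp add: sortp_def)

lemma sortp_props: "length (sortp xs) = length xs" "sorted (rev (sortp xs))"
  by (auto simp: sortp_def)

lemma lex_sorted:
  assumes l: "length ys = length zs" and sy: "sorted (rev ys)" and sz: "sorted (rev zs)"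
    and lg: "lex_gt ys zs"
  shows "\<exists>x. D zs x < D ys x"
proof -
  obtain i where i: "i < length zs" "take i ys = take i zs" "ys ! i > zs ! i"
    using lg l unfolding lex_gt_def by auto
  let ?x = "zs ! i"
  have ys: "ys = take i ys @ ys ! i # drop (Suc i) ys" by (metis i(1) l id_take_nth_drop)
  have zs: "zs = take i zs @ zs ! i # drop (Suc i) zs" using i by (simp add: id_take_nth_drop)
  have "\<forall>a\<in>set (drop (Suc i) zs). a - ?x = 0"
  proof
    fix a assume "a \<in> set (drop (Suc i) zs)"
    then obtain j where "j < length (drop (Suc i) zs)" "drop (Suc i) zs ! j = a"
      by (auto simp: in_set_conv_nth)
    then have "a = zs ! (Suc i + j)" "Suc i + j < length zs" by auto
    then show "a - ?x = 0" using sorted_rev_nth_mono[OF sz, of i "Suc i + j"] by simp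
  qed
  then have z0: "D (drop (Suc i) zs) ?x = 0" unfolding D_def
    by (simp add: sum_list_eq_0_iff)
  have "D zs ?x = D (take i zs) ?x + D (drop (Suc i) zs) ?x"
    by (subst zs) (simp add: D_def)
  also have "\<dots> = D (take i ys) ?x" using z0 i by simp
  also have "\<dots> < D (take i ys) ?x + (ys ! i - ?x) + D (drop (Suc i) ys) ?x" using i by simp
  also have "\<dots> = D ys ?x" by (subst (3) ys) (simp add: D_def)
  finally show ?thesis by blast
qed


lemma sum_eq_pointwise:
  fixes f g :: "nat \<Rightarrow> nat"
  assumes "finite A" "\<forall>i\<in>A. g i \<le> f i" "sum f A \<le> sum g A" "i \<in> A"
  shows "f i = g i"
proof (rule ccontr)
  assume "f i \<noteq> g i"
  then have "g i < f i" using assms by force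
  then have "sum g A < sum f A" using assms by (intro sum_strict_mono_ex1) auto
  then show False using assms by simp
qed

locale fillg = fill +
  fixes \<gamma> :: "nat list"
  assumes lg: "length \<gamma> = length \<alpha>" and xe: "xexp \<alpha> F = mon_exp \<sigma> \<gamma>"
begin

lemma cnt: "i \<in> {1..length \<alpha>} \<Longrightarrow> card {u \<in> nonbasement \<alpha>. F u = ent \<sigma> i} = ent \<gamma> i"
  using lookup_xexp[of "ent \<sigma> i"] lookup_mon[OF lg] xe by simp

lemma Dbound: "D \<gamma> x \<le> D \<alpha> x"
proof -
  let ?N = "{1..length \<alpha>}"
  have "D \<gamma> x = (\<Sum>i\<in>?N. ent \<gamma> i - x)" using D_ent lg by simp
  also have "\<dots> \<le> (\<Sum>i\<in>?N. card (S i x))" using S_ge[OF _ cnt] by (intro sum_mono) auto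
  also have "\<dots> \<le> card {u \<in> nonbasement \<alpha>. fst u \<in> ?N \<and> x < snd u}"
    by (rule union_bound) (simp_all, auto simp: S_def nonbasement_def)
  also have "\<dots> = D \<alpha> x" using card_cols[of ?N] D_ent by simp
  finally show ?thesis .
qed

lemma part1: "\<not> lex_gt (sortp \<gamma>) (sortp \<alpha>)"
proof
  assume "lex_gt (sortp \<gamma>) (sortp \<alpha>)"
  then obtain x where "D (sortp \<alpha>) x < D (sortp \<gamma>) x"
    using lex_sorted sortp_props lg by metis
  then show False using Dbound[of x] D_sortp by simp
qed

context
  assumes ms: "mset \<gamma> = mset \<alpha>"
begin

lemma S_eq: "i \<in> {1..length \<alpha>} \<Longrightarrow> card (S i x) = ent \<gamma> i - x"
proof -
  assume i: "i \<in> {1..length \<alpha>}"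
  let ?N = "{1..length \<alpha>}"
  have "(\<Sum>i\<in>?N. card (S i x)) \<le> card {u \<in> nonbasement \<alpha>. fst u \<in> ?N \<and> x < snd u}"
    by (rule union_bound) (simp_all, auto simp: S_def nonbasement_def)
  also have "\<dots> = D \<alpha> x" using card_cols[of ?N] D_ent by simp
  also have "\<dots> = D \<gamma> x" using D_mset[OF ms] by simp
  also have "\<dots> = (\<Sum>i\<in>?N. ent \<gamma> i - x)" using D_ent lg by simp
  finally show ?thesis using S_ge[OF _ cnt] i
    by (intro sum_eq_pointwise[of ?N]) auto
qed

lemma col_lemma:
  assumes i: "i \<in> {1..length \<alpha>}" and c: "1 \<le> c"
  shows "(\<exists>r. (r, c) \<in> nonbasement \<alpha> \<and> F (r, c) = ent \<sigma> i) \<longleftrightarrow> c \<le> ent \<gamma> i"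
proof -
  let ?E = "{u \<in> nonbasement \<alpha>. F u = ent \<sigma> i \<and> snd u = c}"
  have "S i (c - 1) = S i c \<union> ?E" using c unfolding S_def by auto
  moreover have "S i c \<inter> ?E = {}" unfolding S_def by auto
  ultimately have "card (S i (c - 1)) = card (S i c) + card ?E"
    by (simp add: card_Un_disjoint)
  then have E: "card ?E = (ent \<gamma> i - (c - 1)) - (ent \<gamma> i - c)" using S_eq[OF i] by simp
  have fE: "finite ?E" by simp
  show ?thesis
  proof
    assume "\<exists>r. (r, c) \<in> nonbasement \<alpha> \<and> F (r, c) = ent \<sigma> i"
    then have "?E \<noteq> {}" by auto
    then have "card ?E \<noteq> 0" using fE by simp
    then show "c \<le> ent \<gamma> i" using E c by linarith
  next
    assume "c \<le> ent \<gamma> i"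
    then have "card ?E \<noteq> 0" using E c by linarith
    then have "?E \<noteq> {}" by (metis card.empty)
    then obtain u where uE: "u \<in> ?E" by blast
    obtain r c' where u: "u = (r, c')" by fastforce
    show "\<exists>r. (r, c) \<in> nonbasement \<alpha> \<and> F (r, c) = ent \<sigma> i"
      using uE u by auto
  qed
qed

lemma row_lemma:
  assumes i: "i \<in> {1..length \<alpha>}"
  shows "(r, c) \<in> boxes \<alpha> \<Longrightarrow> F (r, c) = ent \<sigma> i \<Longrightarrow> r \<le> i"
proof (induction c arbitrary: r)
  case 0
  then have r: "r \<in> {1..length \<alpha>}" unfolding boxes_def by auto
  have "ent \<sigma> r = ent \<sigma> i" using F_base[OF r] 0(2) by simp
  then have "r = i" using ent_sig_inj r i by blast
  then show ?case by simp
next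
  case (Suc c)
  then have nb: "(r, Suc c) \<in> nonbasement \<alpha>" unfolding boxes_def nonbasement_def by auto
  have "\<exists>r'. (r', Suc c) \<in> nonbasement \<alpha> \<and> F (r', Suc c) = ent \<sigma> i"
    using nb Suc.prems(2) by blast
  then have le: "Suc c \<le> ent \<gamma> i" using col_lemma[OF i, of "Suc c"] by simp
  obtain r0 where r0: "(r0, c) \<in> boxes \<alpha>" "F (r0, c) = ent \<sigma> i"
  proof (cases "c = 0")
    case True
    have "(i, 0) \<in> boxes \<alpha>" using i unfolding boxes_def by auto
    moreover have "F (i, 0) = ent \<sigma> i" by (rule F_base[OF i])
    ultimately show ?thesis using that True by simp
  next
    case False
    then have c1: "1 \<le> c" "c \<le> ent \<gamma> i" using le by auto
    have "\<exists>r'. (r', c) \<in> nonbasement \<alpha> \<and> F (r', c) = ent \<sigma> i"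
      using col_lemma[OF i c1(1)] c1(2) by simp
    then obtain r0 where "(r0, c) \<in> nonbasement \<alpha>" "F (r0, c) = ent \<sigma> i" by blast
    then show ?thesis using that nb_boxes by blast
  qed
  have "r0 \<le> i" using Suc.IH r0 by blast
  moreover have "r \<le> r0" using adj[OF r0(1) Suc.prems(1)] r0(2) Suc.prems(2) by simp
  ultimately show ?case by simp
qed

lemma part2: "\<not> lex_gt \<gamma> \<alpha>"
proof
  assume "lex_gt \<gamma> \<alpha>"
  then obtain p0 where p0: "p0 < length \<alpha>" "take p0 \<gamma> = take p0 \<alpha>" "\<gamma> ! p0 > \<alpha> ! p0"
    unfolding lex_gt_def using lg by auto
  define x where "x = \<gamma> ! p0 - 1"
  let ?R = "{1..Suc p0}"
  have R: "?R \<subseteq> {1..length \<alpha>}" using p0 by auto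
  have "(\<Sum>i\<in>?R. card (S i x)) \<le> card {u \<in> nonbasement \<alpha>. fst u \<in> ?R \<and> x < snd u}"
  proof (rule union_bound[OF R])
    show "\<forall>i\<in>?R. S i x \<subseteq> {u \<in> nonbasement \<alpha>. fst u \<in> ?R \<and> x < snd u}"
    proof (intro ballI subsetI)
      fix i u assume iR: "i \<in> ?R" and u: "u \<in> S i x"
      obtain r c where rc: "u = (r, c)" by fastforce
      have "(r, c) \<in> nonbasement \<alpha>" "F (r, c) = ent \<sigma> i" using u rc unfolding S_def by auto
      then have "r \<le> i" "1 \<le> r" using row_lemma[of i r c] iR R nb_boxes
        unfolding nonbasement_def by auto
      then show "u \<in> {u \<in> nonbasement \<alpha>. fst u \<in> ?R \<and> x < snd u}"
        using u rc iR unfolding S_def by auto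
    qed
  qed simp
  also have "\<dots> = (\<Sum>r\<in>?R. ent \<alpha> r - x)" using card_cols[OF R] .
  finally have ineq: "(\<Sum>i\<in>?R. ent \<gamma> i - x) \<le> (\<Sum>r\<in>?R. ent \<alpha> r - x)"
    using S_eq R by (simp add: subset_iff)
  have eqs: "\<forall>i\<in>{1..p0}. ent \<gamma> i - x = ent \<alpha> i - x"
  proof
    fix i assume "i \<in> {1..p0}"
    then have h: "i - 1 < p0" by auto
    then have "\<gamma> ! (i - 1) = \<alpha> ! (i - 1)" using p0(2) nth_take[of "i - 1" p0 \<gamma>] nth_take[of "i - 1" p0 \<alpha>]
      by simp
    then show "ent \<gamma> i - x = ent \<alpha> i - x" by (simp add: ent_def)
  qed
  have "(\<Sum>i\<in>?R. ent \<gamma> i - x) = (\<Sum>i\<in>{1..p0}. ent \<gamma> i - x) + (ent \<gamma> (Suc p0) - x)"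
    by simp
  moreover have "(\<Sum>i\<in>?R. ent \<alpha> i - x) = (\<Sum>i\<in>{1..p0}. ent \<alpha> i - x) + (ent \<alpha> (Suc p0) - x)"
    by simp
  moreover have "(\<Sum>i\<in>{1..p0}. ent \<gamma> i - x) = (\<Sum>i\<in>{1..p0}. ent \<alpha> i - x)"
    using eqs by (auto intro!: sum.cong)
  moreover have "ent \<gamma> (Suc p0) - x = 1" "ent \<alpha> (Suc p0) - x = 0"
    using p0(3) unfolding x_def ent_def by auto
  ultimately show False using ineq by simp
qed

lemma part3:
  assumes ga: "\<gamma> = \<alpha>"
  shows "F = F0 \<sigma> \<alpha>"
proof -
  have rows: "\<forall>c. 1 \<le> c \<and> c \<le> ent \<alpha> r \<longrightarrow> F (r, c) = ent \<sigma> r" if "r \<in> {1..length \<alpha>}" for r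
    using that
  proof (induction r rule: less_induct)
    case (less r)
    show ?case
    proof (intro allI impI)
      fix c assume c: "1 \<le> c \<and> c \<le> ent \<alpha> r"
      then obtain r1 where r1: "(r1, c) \<in> nonbasement \<alpha>" "F (r1, c) = ent \<sigma> r"
        using col_lemma[OF less.prems, of c] ga by auto
      have "r1 \<le> r" using row_lemma[OF less.prems] r1 nb_boxes by blast
      moreover have "\<not> r1 < r"
      proof
        assume lt: "r1 < r"
        have r1N: "r1 \<in> {1..length \<alpha>}" "c \<le> ent \<alpha> r1" using r1(1) unfolding nonbasement_def by auto
        then have "F (r1, c) = ent \<sigma> r1" using less.IH[OF lt r1N(1)] c by blast
        then have "r1 = r" using r1(2) ent_sig_inj r1N(1) less.prems by metis
        then show False using lt by simp
      qed
      ultimately show "F (r, c) = ent \<sigma> r" using r1 by (metis le_neq_implies_less)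
    qed
  qed
  show ?thesis
  proof
    fix u :: "nat \<times> nat"
    obtain r c where u: "u = (r, c)" by fastforce
    show "F u = F0 \<sigma> \<alpha> u"
    proof (cases "u \<in> boxes \<alpha>")
      case True
      then have r: "r \<in> {1..length \<alpha>}" "c \<le> ent \<alpha> r" using u unfolding boxes_def by auto
      show ?thesis
      proof (cases "c = 0")
        case True then show ?thesis using F_base[OF r(1)] u \<open>u \<in> boxes \<alpha>\<close> by (simp add: F0_def)
      next
        case False then show ?thesis using rows[OF r(1)] r u \<open>u \<in> boxes \<alpha>\<close> by (simp add: F0_def)
      qed
    next
      case False then show ?thesis using F_out by (simp add: F0_def)
    qed
  qed
qed

end

end


context perm
begin

lemma F0_NAF: "F0 \<sigma> \<alpha> \<in> NAF \<sigma> \<alpha>"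
  unfolding NAF_def non_attacking_def mem_Collect_eq
proof (intro conjI allI impI ballI)
  show "F0 \<sigma> \<alpha> u = 0" if "u \<notin> boxes \<alpha>" for u using that by (simp add: F0_def)
  show "F0 \<sigma> \<alpha> u \<in> {1..length \<alpha>}" if "u \<in> boxes \<alpha>" for u
  proof -
    have "fst u \<in> {1..length \<alpha>}" using that unfolding boxes_def by auto
    then show ?thesis using that ent_sig_in by (simp add: F0_def)
  qed
  show "F0 \<sigma> \<alpha> (r, 0) = ent \<sigma> r" if "r \<in> {1..length \<alpha>}" for r
    using that unfolding F0_def boxes_def by auto
  show "F0 \<sigma> \<alpha> (r, c) \<noteq> F0 \<sigma> \<alpha> (r', c)"
    if h: "(r, c) \<in> boxes \<alpha> \<and> (r', c) \<in> boxes \<alpha> \<and> r \<noteq> r'" for r r' c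
  proof -
    have r: "r \<in> {1..length \<alpha>}" "r' \<in> {1..length \<alpha>}" using h unfolding boxes_def by auto
    have "F0 \<sigma> \<alpha> (r, c) = ent \<sigma> r" "F0 \<sigma> \<alpha> (r', c) = ent \<sigma> r'" using h by (simp_all add: F0_def)
    then show ?thesis using ent_sig_inj[OF r] h by auto
  qed
  show "F0 \<sigma> \<alpha> (r, c) \<noteq> F0 \<sigma> \<alpha> (r', Suc c)"
    if h: "(r, c) \<in> boxes \<alpha> \<and> (r', Suc c) \<in> boxes \<alpha> \<and> r < r'" for r r' c
  proof -
    have r: "r \<in> {1..length \<alpha>}" "r' \<in> {1..length \<alpha>}" using h unfolding boxes_def by auto
    have "F0 \<sigma> \<alpha> (r, c) = ent \<sigma> r" "F0 \<sigma> \<alpha> (r', Suc c) = ent \<sigma> r'" using h by (simp_all add: F0_def)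
    then show ?thesis using ent_sig_inj[OF r] h by auto
  qed
qed

interpretation F0fill: fill \<sigma> \<alpha> "F0 \<sigma> \<alpha>"
  by unfold_locales (rule F0_NAF)

lemma F0_xexp: "xexp \<alpha> (F0 \<sigma> \<alpha>) = mon_exp \<sigma> \<alpha>"
proof (rule poly_mapping_eqI)
  fix v
  show "Poly_Mapping.lookup (xexp \<alpha> (F0 \<sigma> \<alpha>)) v = Poly_Mapping.lookup (mon_exp \<sigma> \<alpha>) v"
  proof (cases "v \<in> {1..length \<alpha>}")
    case True
    then obtain i where i: "i \<in> {1..length \<alpha>}" "ent \<sigma> i = v" using ent_sig_surj by blast
    have "{u \<in> nonbasement \<alpha>. F0 \<sigma> \<alpha> u = ent \<sigma> i} = {u \<in> nonbasement \<alpha>. fst u = i}"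
    proof (intro Collect_cong conj_cong refl)
      fix u assume u: "u \<in> nonbasement \<alpha>"
      then have "F0 \<sigma> \<alpha> u = ent \<sigma> (fst u)" "fst u \<in> {1..length \<alpha>}"
        using nb_boxes unfolding F0_def nonbasement_def by auto
      then show "(F0 \<sigma> \<alpha> u = ent \<sigma> i) = (fst u = i)" using ent_sig_inj i(1) by auto
    qed
    also have "\<dots> = {i} \<times> {1..ent \<alpha> i}" using i(1) unfolding nonbasement_def by auto
    finally have "{u \<in> nonbasement \<alpha>. F0 \<sigma> \<alpha> u = ent \<sigma> i} = {i} \<times> {1..ent \<alpha> i}" .
    then show ?thesis using F0fill.lookup_xexp F0fill.lookup_mon[OF refl i(1)] i by simp
  next
    case False
    have "{u \<in> nonbasement \<alpha>. F0 \<sigma> \<alpha> u = v} = {}"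
      using False F0fill.F_in nb_boxes by auto
    then show ?thesis using F0fill.lookup_xexp F0fill.lookup_mon0[OF refl False] by simp
  qed
qed

lemma inv_triple_same: "s \<noteq> t \<Longrightarrow> inv_triple s s t"
  unfolding inv_triple_def box_less_def by auto

lemma F0_weight: "weight \<alpha> (F0 \<sigma> \<alpha>) = 1"
proof -
  have d: "F0 \<sigma> \<alpha> (dbox u) = F0 \<sigma> \<alpha> u" if "u \<in> nonbasement \<alpha>" for u
    using that unfolding nonbasement_def boxes_def F0_def dbox_def by auto
  have m: "maj \<alpha> (F0 \<sigma> \<alpha>) = 0" unfolding maj_def using d by simp
  have p: "{u \<in> nonbasement \<alpha>. F0 \<sigma> \<alpha> u \<noteq> F0 \<sigma> \<alpha> (dbox u)} = {}" using d by auto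
  have A: "{(r, c, r'). (r, c) \<in> nonbasement \<alpha> \<and> r < r' \<and> r' \<le> length \<alpha> \<and>
              c \<le> ent \<alpha> r' \<and> ent \<alpha> r' \<le> ent \<alpha> r \<and>
              \<not> inv_triple (F0 \<sigma> \<alpha> (r, c - 1)) (F0 \<sigma> \<alpha> (r, c)) (F0 \<sigma> \<alpha> (r', c))} = {}"
  proof -
    { fix r c r' assume h: "(r, c) \<in> nonbasement \<alpha>" "r < r'" "r' \<le> length \<alpha>" "c \<le> ent \<alpha> r'"
      then have "inv_triple (F0 \<sigma> \<alpha> (r, c - 1)) (F0 \<sigma> \<alpha> (r, c)) (F0 \<sigma> \<alpha> (r', c))"
        using inv_triple_same ent_sig_inj[of r r']
        unfolding nonbasement_def boxes_def F0_def by auto }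
    then show ?thesis by auto
  qed
  have B: "{(r, c, r'). (r, c) \<in> nonbasement \<alpha> \<and> 1 \<le> r' \<and> r' < r \<and>
              c - 1 \<le> ent \<alpha> r' \<and> ent \<alpha> r' < ent \<alpha> r \<and>
              \<not> inv_triple (F0 \<sigma> \<alpha> (r, c - 1)) (F0 \<sigma> \<alpha> (r, c)) (F0 \<sigma> \<alpha> (r', c - 1))} = {}"
  proof -
    { fix r c r' assume h: "(r, c) \<in> nonbasement \<alpha>" "1 \<le> r'" "r' < r" "c - 1 \<le> ent \<alpha> r'"
      then have "inv_triple (F0 \<sigma> \<alpha> (r, c - 1)) (F0 \<sigma> \<alpha> (r, c)) (F0 \<sigma> \<alpha> (r', c - 1))"
        using inv_triple_same ent_sig_inj[of r r']
        unfolding nonbasement_def boxes_def F0_def by auto }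
    then show ?thesis by auto
  qed
  have c: "coinv \<alpha> (F0 \<sigma> \<alpha>) = 0" unfolding coinv_def A B by simp
  show ?thesis unfolding weight_def m c p by simp
qed

lemma fin_NAF: "finite (NAF \<sigma> \<alpha>)"
proof (rule finite_subset)
  show "NAF \<sigma> \<alpha> \<subseteq> {f. \<forall>x. (x \<in> boxes \<alpha> \<longrightarrow> f x \<in> {1..length \<alpha>}) \<and> (x \<notin> boxes \<alpha> \<longrightarrow> f x = 0)}"
    unfolding NAF_def by auto
  show "finite {f. \<forall>x. (x \<in> boxes \<alpha> \<longrightarrow> f x \<in> {1..length \<alpha>}) \<and> (x \<notin> boxes \<alpha> \<longrightarrow> f x = 0)}"
    by (rule finite_set_of_finite_funs) (simp_all add: boxes_eq)
qed

end

lemma lookup_Emac: "Poly_Mapping.lookup (Emac \<sigma> \<alpha>) e = (\<Sum>F\<in>NAF \<sigma> \<alpha>. (weight \<alpha> F when xexp \<alpha> F = e))"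
  unfolding Emac_def lookup_sum lookup_single by simp

theorem mainTheorem1:
  fixes n m :: nat and \<gamma> \<alpha> \<sigma> :: "nat list"
  assumes "1 \<le> n"
    and "length \<gamma> = n" and "sum_list \<gamma> = m"
    and "length \<alpha> = n" and "sum_list \<alpha> = m"
    and "\<sigma> \<in> permutations_of_set {1..n}"
  shows "(lex_gt (sortp \<gamma>) (sortp \<alpha>) \<longrightarrow> Poly_Mapping.lookup (Emac \<sigma> \<alpha>) (mon_exp \<sigma> \<gamma>) = 0) \<and>
         (sortp \<gamma> = sortp \<alpha> \<and> lex_gt \<gamma> \<alpha> \<longrightarrow> Poly_Mapping.lookup (Emac \<sigma> \<alpha>) (mon_exp \<sigma> \<gamma>) = 0) \<and>
         (\<gamma> = \<alpha> \<longrightarrow> Poly_Mapping.lookup (Emac \<sigma> \<alpha>) (mon_exp \<sigma> \<gamma>) = 1)"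
proof -
  interpret P: perm \<sigma> \<alpha>
    using assms(4,6) by unfold_locales (auto dest: permutations_of_setD)
  have G: "fillg \<sigma> \<alpha> F \<gamma>" if "F \<in> NAF \<sigma> \<alpha>" "xexp \<alpha> F = mon_exp \<sigma> \<gamma>" for F
    using that assms(2,4) by unfold_locales auto
  have zero: "Poly_Mapping.lookup (Emac \<sigma> \<alpha>) (mon_exp \<sigma> \<gamma>) = 0"
    if nz: "\<And>F. F \<in> NAF \<sigma> \<alpha> \<Longrightarrow> xexp \<alpha> F \<noteq> mon_exp \<sigma> \<gamma>"
    unfolding lookup_Emac using nz by (intro sum.neutral) (auto simp: when_def)
  have p1: "lex_gt (sortp \<gamma>) (sortp \<alpha>) \<longrightarrow> Poly_Mapping.lookup (Emac \<sigma> \<alpha>) (mon_exp \<sigma> \<gamma>) = 0"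
    using zero G fillg.part1 by blast
  have p2: "sortp \<gamma> = sortp \<alpha> \<and> lex_gt \<gamma> \<alpha> \<longrightarrow> Poly_Mapping.lookup (Emac \<sigma> \<alpha>) (mon_exp \<sigma> \<gamma>) = 0"
  proof
    assume h: "sortp \<gamma> = sortp \<alpha> \<and> lex_gt \<gamma> \<alpha>"
    then have ms: "mset \<gamma> = mset \<alpha>" unfolding sortp_def by (metis mset_rev mset_sort)
    show "Poly_Mapping.lookup (Emac \<sigma> \<alpha>) (mon_exp \<sigma> \<gamma>) = 0"
      using zero G fillg.part2[OF _ ms] h by blast
  qed
  have p3: "\<gamma> = \<alpha> \<longrightarrow> Poly_Mapping.lookup (Emac \<sigma> \<alpha>) (mon_exp \<sigma> \<gamma>) = 1"
  proof
    assume ga: "\<gamma> = \<alpha>"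
    have "\<forall>F\<in>NAF \<sigma> \<alpha>. (weight \<alpha> F when xexp \<alpha> F = mon_exp \<sigma> \<gamma>) =
            (if F = F0 \<sigma> \<alpha> then weight \<alpha> F else 0)"
    proof
      fix F assume F: "F \<in> NAF \<sigma> \<alpha>"
      show "(weight \<alpha> F when xexp \<alpha> F = mon_exp \<sigma> \<gamma>) = (if F = F0 \<sigma> \<alpha> then weight \<alpha> F else 0)"
      proof (cases "xexp \<alpha> F = mon_exp \<sigma> \<gamma>")
        case True
        then have "F = F0 \<sigma> \<alpha>" using fillg.part3[OF G[OF F True]] ga by simp
        then show ?thesis using True by (simp add: when_def)
      next
        case False
        then have "F \<noteq> F0 \<sigma> \<alpha>" using P.F0_xexp ga by auto
        then show ?thesis using False by (simp add: when_def)
      qed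
    qed
    then have "Poly_Mapping.lookup (Emac \<sigma> \<alpha>) (mon_exp \<sigma> \<gamma>) =
        (\<Sum>F\<in>NAF \<sigma> \<alpha>. if F = F0 \<sigma> \<alpha> then weight \<alpha> F else 0)"
      unfolding lookup_Emac by (auto intro!: sum.cong)
    also have "\<dots> = weight \<alpha> (F0 \<sigma> \<alpha>)" using P.fin_NAF P.F0_NAF by simp
    finally show "Poly_Mapping.lookup (Emac \<sigma> \<alpha>) (mon_exp \<sigma> \<gamma>) = 1" using P.F0_weight by simp
  qed
  show ?thesis using p1 p2 p3 by blast
qed

end
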